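(* Let $T$ be a finite tree rooted at a vertex $v$ and let $M_0$ be a dominating set of $T$ such that (a) no parent of a supported vertex of $M_0$ lies in $M_0$, and (b) no supported vertex of $M_0$ is a descendant of another supported vertex of $M_0$. Then Algorithm 1 (described below), applied to $T$ rooted at $v$ and $M_0$, terminates and outputs a minimal dominating set $M_i$ with $|M_i|\ge |M_0|$ (for any choices made during the algorithm). Algorithm 1: set $i=0$; while $M_i$ is not a minimal dominating set: choose a supported vertex $u_i\in M_i\setminus a(M_i)$ of least depth; let $A_{i+1}$ be the set of vertices of $a_1(M_i)$ adjacent to $u_i$; let $N_{i+1}$ be the set of vertices of $N_1(M_i)$ adjacent to a vertex of $A_{i+1}$; set $M_{i+1}=(M_i\setminus A_{i+1})\cup N_{i+1}$ and increase $i$ by one. When the loop ends, return $M_i$.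
   Context: A dominating set of a graph $G=(V,E)$ is a set $S\subseteq V$ such that every vertex is in $S$ or adjacent to a vertex of $S$; it is minimal if no proper subset is dominating. $N[u]=N(u)\cup\{u\}$ is the closed neighbourhood. For a dominating set $S$: $a(S)=\{u\in S: S\setminus\{u\}\text{ is not dominating}\}$ (critical vertices); vertices of $S\setminus a(S)$ are called supported; $N_1(S)=\{u\in V\setminus S: |N[u]\cap S|=1\}$; $a_1(S)=\{u\in a(S): N[u]\cap N_1(S)\ne\emptyset\}$. In a tree rooted at $v$, depth is the distance to $v$; $x$ is a descendant of $y$ if $y$ lies on the path from $x$ to $v$; the parent of $x\neq v$ is its neighbour on that path. *)

theory Defs
  imports Main
begin

text \<open>Simple graphs: vertex set V, adjacency relation E (symmetric, irreflexive, within V).\<close>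

definition closed_nbhd :: "'a set \<Rightarrow> ('a \<Rightarrow> 'a \<Rightarrow> bool) \<Rightarrow> 'a \<Rightarrow> 'a set" where
  "closed_nbhd V E u = {w \<in> V. w = u \<or> E u w}"

definition dominating :: "'a set \<Rightarrow> ('a \<Rightarrow> 'a \<Rightarrow> bool) \<Rightarrow> 'a set \<Rightarrow> bool" where
  "dominating V E S \<longleftrightarrow> S \<subseteq> V \<and> (\<forall>x\<in>V. x \<in> S \<or> (\<exists>s\<in>S. E x s))"

definition minimal_dominating :: "'a set \<Rightarrow> ('a \<Rightarrow> 'a \<Rightarrow> bool) \<Rightarrow> 'a set \<Rightarrow> bool" where
  "minimal_dominating V E S \<longleftrightarrow> dominating V E S \<and> (\<forall>S'. S' \<subset> S \<longrightarrow> \<not> dominating V E S')"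

text \<open>a(S): critical vertices\<close>
definition crit :: "'a set \<Rightarrow> ('a \<Rightarrow> 'a \<Rightarrow> bool) \<Rightarrow> 'a set \<Rightarrow> 'a set" where
  "crit V E S = {u \<in> S. \<not> dominating V E (S - {u})}"

definition supported :: "'a set \<Rightarrow> ('a \<Rightarrow> 'a \<Rightarrow> bool) \<Rightarrow> 'a set \<Rightarrow> 'a set" where
  "supported V E S = S - crit V E S"

definition N1 :: "'a set \<Rightarrow> ('a \<Rightarrow> 'a \<Rightarrow> bool) \<Rightarrow> 'a set \<Rightarrow> 'a set" where
  "N1 V E S = {u \<in> V - S. card (closed_nbhd V E u \<inter> S) = 1}"

definition a1 :: "'a set \<Rightarrow> ('a \<Rightarrow> 'a \<Rightarrow> bool) \<Rightarrow> 'a set \<Rightarrow> 'a set" where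
  "a1 V E S = {u \<in> crit V E S. closed_nbhd V E u \<inter> N1 V E S \<noteq> {}}"

definition is_path :: "'a set \<Rightarrow> ('a \<Rightarrow> 'a \<Rightarrow> bool) \<Rightarrow> 'a list \<Rightarrow> 'a \<Rightarrow> 'a \<Rightarrow> bool" where
  "is_path V E xs x y \<longleftrightarrow> xs \<noteq> [] \<and> distinct xs \<and> set xs \<subseteq> V \<and> hd xs = x \<and> last xs = y \<and>
     (\<forall>i. Suc i < length xs \<longrightarrow> E (xs ! i) (xs ! Suc i))"

definition is_tree :: "'a set \<Rightarrow> ('a \<Rightarrow> 'a \<Rightarrow> bool) \<Rightarrow> bool" where
  "is_tree V E \<longleftrightarrow> finite V \<and> V \<noteq> {} \<and>
     (\<forall>x y. E x y \<longrightarrow> x \<in> V \<and> y \<in> V \<and> E y x \<and> x \<noteq> y) \<and>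
     (\<forall>x\<in>V. \<forall>y\<in>V. \<exists>xs. is_path V E xs x y) \<and>
     \<not> (\<exists>xs. 3 \<le> length xs \<and> is_path V E xs (hd xs) (last xs) \<and> E (last xs) (hd xs))"

definition depth :: "'a set \<Rightarrow> ('a \<Rightarrow> 'a \<Rightarrow> bool) \<Rightarrow> 'a \<Rightarrow> 'a \<Rightarrow> nat" where
  "depth V E v x = (LEAST n. \<exists>xs. is_path V E xs x v \<and> length xs = Suc n)"

definition descendant :: "'a set \<Rightarrow> ('a \<Rightarrow> 'a \<Rightarrow> bool) \<Rightarrow> 'a \<Rightarrow> 'a \<Rightarrow> 'a \<Rightarrow> bool" where
  "descendant V E v x y \<longleftrightarrow> (\<exists>xs. is_path V E xs x v \<and> y \<in> set xs)"

definition is_parent :: "'a set \<Rightarrow> ('a \<Rightarrow> 'a \<Rightarrow> bool) \<Rightarrow> 'a \<Rightarrow> 'a \<Rightarrow> 'a \<Rightarrow> bool" where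
  "is_parent V E v x p \<longleftrightarrow> x \<noteq> v \<and> E x p \<and> (\<exists>xs. is_path V E xs x v \<and> p \<in> set xs)"

definition alg_step :: "'a set \<Rightarrow> ('a \<Rightarrow> 'a \<Rightarrow> bool) \<Rightarrow> 'a \<Rightarrow> 'a set \<Rightarrow> 'a set \<Rightarrow> bool" where
  "alg_step V E v M M' \<longleftrightarrow> \<not> minimal_dominating V E M \<and>
     (\<exists>u. u \<in> supported V E M \<and> (\<forall>w\<in>supported V E M. depth V E v u \<le> depth V E v w) \<and>
        (let A = {x \<in> a1 V E M. E x u};
             N = {y \<in> N1 V E M. \<exists>x\<in>A. E y x}
         in M' = (M - A) \<union> N))"

end

theory Submission
  imports Defs
begin

lemma is_path_succ: "is_path V E xs x y \<longleftrightarrow> xs \<noteq> [] \<and> distinct xs \<and> set xs \<subseteq> V \<and> hd xs = x \<and> last xs = y \<and> successively E xs"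
  unfolding is_path_def successively_conv_nth by blast

lemma distinct_hd_last: "distinct xs \<Longrightarrow> xs \<noteq> [] \<Longrightarrow> hd xs = last xs \<Longrightarrow> xs = [hd xs]"
  by (cases xs) (auto simp: last_in_set split: if_splits)

locale rtree =
  fixes V :: "'a set" and E :: "'a \<Rightarrow> 'a \<Rightarrow> bool" and v :: 'a
  assumes tree: "is_tree V E" and root: "v \<in> V"
begin

lemma finV: "finite V" using tree unfolding is_tree_def by blast
lemma symE: "E x y \<Longrightarrow> E y x" using tree unfolding is_tree_def by blast
lemma irrE: "E x y \<Longrightarrow> x \<noteq> y" using tree unfolding is_tree_def by blast
lemma inV1: "E x y \<Longrightarrow> x \<in> V" using tree unfolding is_tree_def by blast
lemma inV2: "E x y \<Longrightarrow> y \<in> V" using tree unfolding is_tree_def by blast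
lemma conn: "x \<in> V \<Longrightarrow> y \<in> V \<Longrightarrow> \<exists>xs. is_path V E xs x y" using tree unfolding is_tree_def by blast
lemma nocyc: "is_path V E xs a b \<Longrightarrow> 3 \<le> length xs \<Longrightarrow> E b a \<Longrightarrow> False"
  using tree unfolding is_tree_def is_path_def by blast

lemma succ_sym: "successively (\<lambda>x y. E y x) xs = successively E xs"
  using successively_mono[of "\<lambda>x y. E y x" xs E] successively_mono[of E xs "\<lambda>x y. E y x"] symE by blast

lemma path_unique:
  "is_path V E xs a b \<Longrightarrow> is_path V E ys a b \<Longrightarrow> xs = ys"
proof (induction "length xs + length ys" arbitrary: xs ys a b rule: less_induct)
  case less
  note px = less.prems(1)[unfolded is_path_succ]
  note py = less.prems(2)[unfolded is_path_succ]
  show ?case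
  proof (cases "\<exists>w\<in>set xs \<inter> set ys. w \<noteq> a \<and> w \<noteq> b")
    case True
    then obtain w where w: "w \<in> set xs" "w \<in> set ys" "w \<noteq> a" "w \<noteq> b" by blast
    obtain xs1 xs2 where xs: "xs = xs1 @ w # xs2" using split_list[OF w(1)] by blast
    obtain ys1 ys2 where ys: "ys = ys1 @ w # ys2" using split_list[OF w(2)] by blast
    have ne: "xs1 \<noteq> []" "ys1 \<noteq> []" "xs2 \<noteq> []" "ys2 \<noteq> []"
      using px py w xs ys by auto
    have p1: "is_path V E (xs1 @ [w]) a w" "is_path V E (ys1 @ [w]) a w"
      using px py xs ys ne unfolding is_path_succ
      by (auto simp: successively_append_iff)
    have p2: "is_path V E (w # xs2) w b" "is_path V E (w # ys2) w b"
      using px py xs ys ne unfolding is_path_succ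
      by (auto simp: successively_append_iff)
    have "xs1 @ [w] = ys1 @ [w]"
      using less.hyps[OF _ p1] ne xs ys by auto
    moreover have "w # xs2 = w # ys2"
      using less.hyps[OF _ p2] ne xs ys by auto
    ultimately show ?thesis using xs ys by simp
  next
    case False
    hence disj: "set xs \<inter> set ys \<subseteq> {a, b}" by blast
    show ?thesis
    proof (cases "a = b")
      case True
      then show ?thesis using px py distinct_hd_last by metis
    next
      case ab: False
      obtain ys' where ys': "ys = a # ys'" using py by (cases ys) auto
      have "ys' \<noteq> []" using ys' py ab by auto
      then obtain mid where mid: "ys' = mid @ [b]" using py ys'
        by (metis append_butlast_last_id last.simps)
      obtain xs' where xs': "xs = a # xs'" using px by (cases xs) auto
      have "xs' \<noteq> []" using xs' px ab by auto
      show ?thesis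
      proof (cases "mid = []")
        case True
        show ?thesis
        proof (cases "length xs = 2")
          case True
          then obtain z where "xs' = [z]" using xs' by (cases xs') auto
          then show ?thesis using xs' px ys' mid \<open>mid = []\<close> by auto
        next
          case False
          hence "3 \<le> length xs" using xs' \<open>xs' \<noteq> []\<close> by (cases xs') (auto simp: Suc_le_eq)
          moreover have "E b a" using py ys' mid True by (auto intro: symE)
          ultimately show ?thesis using nocyc less.prems(1) by blast
        qed
      next
        case False
        define C where "C = xs @ rev mid"
        have dmid: "set mid \<inter> set xs = {}" using disj py ys' mid by auto
        have sm: "successively E (a # mid @ [b])" using py ys' mid by simp
        have "successively E mid" using sm by (auto simp: successively_append_iff successively_Cons)
        hence "successively E (rev mid)" by (simp add: succ_sym)
        moreover have "E b (last mid)"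
        proof -
          have "successively E (mid @ [b])" using sm by (simp add: successively_Cons)
          hence "E (last mid) b" using False by (simp add: successively_append_iff)
          thus ?thesis by (rule symE)
        qed
        ultimately have "successively E C" using px False unfolding C_def
          by (auto simp: successively_append_iff hd_rev)
        moreover have "E (hd mid) a" using sm False
          by (cases mid) (auto intro: symE)
        moreover have "distinct C" using px py ys' mid dmid unfolding C_def by auto
        moreover have "set C \<subseteq> V" using px py ys' mid unfolding C_def by auto
        moreover have "3 \<le> length C" using xs' \<open>xs' \<noteq> []\<close> False unfolding C_def
          by (cases xs'; cases mid) auto
        moreover have "hd C = a" "last C = hd mid" using px False unfolding C_def
          by (auto simp: last_rev)
        ultimately show ?thesis using nocyc[of C a "hd mid"] unfolding is_path_succ by fastforce
      qed
    qed
  qed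
qed

definition pth where "pth x = (THE xs. is_path V E xs x v)"

lemma pth_path: "x \<in> V \<Longrightarrow> is_path V E (pth x) x v"
proof -
  assume "x \<in> V"
  then obtain xs where "is_path V E xs x v" using conn[OF _ root] by blast
  then show ?thesis unfolding pth_def using theI[of "\<lambda>xs. is_path V E xs x v" xs] path_unique by blast
qed

lemma path_V: assumes "is_path V E xs x y" shows "x \<in> V"
proof -
  have "hd xs \<in> set xs" using assms unfolding is_path_def by (intro hd_in_set) blast
  thus ?thesis using assms unfolding is_path_def by blast
qed

lemma pth_eq: assumes "is_path V E xs x v" shows "pth x = xs"
  using path_unique[OF pth_path[OF path_V[OF assms]] assms] .

lemma succ_drop: "successively P xs \<Longrightarrow> successively P (drop k xs)"
proof -
  assume "successively P xs"
  hence "successively P (take k xs @ drop k xs)" by simp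
  thus ?thesis unfolding successively_append_iff by blast
qed

lemma succ_take: "successively P xs \<Longrightarrow> successively P (take k xs)"
proof -
  assume "successively P xs"
  hence "successively P (take k xs @ drop k xs)" by simp
  thus ?thesis unfolding successively_append_iff by blast
qed

lemma path_drop: assumes "is_path V E xs x y" "k < length xs"
  shows "is_path V E (drop k xs) (xs ! k) y"
proof -
  show ?thesis using assms succ_drop[of E xs k] unfolding is_path_succ
    by (auto simp: successively_append_iff hd_drop_conv_nth dest: in_set_dropD)
qed

lemma pth_drop: "x \<in> V \<Longrightarrow> k < length (pth x) \<Longrightarrow> pth (pth x ! k) = drop k (pth x)"
  using pth_eq path_drop pth_path by blast

lemma pth_ne: assumes "x \<in> V" shows "pth x \<noteq> []" using pth_path[OF assms] unfolding is_path_def by blast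
lemma pth_hd: assumes "x \<in> V" shows "pth x ! 0 = x" using pth_path[OF assms] unfolding is_path_def by (metis hd_conv_nth)

lemma desc_iff: "x \<in> V \<Longrightarrow> descendant V E v x y \<longleftrightarrow> y \<in> set (pth x)"
  unfolding descendant_def using pth_eq pth_path by blast

lemma depth_eq: assumes "x \<in> V" shows "depth V E v x = length (pth x) - 1"
  unfolding depth_def
proof (rule Least_equality)
  show "\<exists>xs. is_path V E xs x v \<and> length xs = Suc (length (pth x) - 1)"
    using pth_path[OF assms] pth_ne[OF assms] by (intro exI[of _ "pth x"]) auto
next
  fix y assume "\<exists>xs. is_path V E xs x v \<and> length xs = Suc y"
  then show "length (pth x) - 1 \<le> y" using pth_eq by fastforce
qed

lemma parent_nth1: assumes "is_parent V E v x p"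
  shows "x \<in> V \<and> 1 < length (pth x) \<and> p = pth x ! 1"
proof -
  have Exp: "E x p" using assms unfolding is_parent_def by blast
  have xV: "x \<in> V" using inV1[OF Exp] .
  obtain xs where xs: "is_path V E xs x v" "p \<in> set xs" using assms unfolding is_parent_def by blast
  have pin: "p \<in> set (pth x)" using pth_eq[OF xs(1)] xs(2) by simp
  obtain k where k: "k < length (pth x)" "pth x ! k = p" using pin by (metis in_set_conv_nth)
  have "k \<noteq> 0" using k pth_hd[OF xV] irrE[OF Exp] by (cases k) auto
  moreover have "\<not> 2 \<le> k"
  proof
    assume k2: "2 \<le> k"
    have pp: "is_path V E (pth x) x v" by (rule pth_path[OF xV])
    have pp1: "distinct (pth x)" "set (pth x) \<subseteq> V" "hd (pth x) = x" "pth x \<noteq> []"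
      using pp unfolding is_path_def by blast+
    have "is_path V E (take (Suc k) (pth x)) x p"
      unfolding is_path_succ
    proof (intro conjI)
      show "take (Suc k) (pth x) \<noteq> []" using k by (cases "pth x") auto
      show "distinct (take (Suc k) (pth x))" using pp1(1) by (rule distinct_take)
      show "set (take (Suc k) (pth x)) \<subseteq> V" using subset_trans[OF set_take_subset pp1(2)] .
      show "hd (take (Suc k) (pth x)) = x" using pp1 by simp
      show "last (take (Suc k) (pth x)) = p" using k by (simp add: take_Suc_conv_app_nth)
      show "successively E (take (Suc k) (pth x))" using pp succ_take unfolding is_path_succ by blast
    qed
    moreover have "3 \<le> length (take (Suc k) (pth x))" using k k2 by auto
    ultimately show False using nocyc[OF _ _ symE[OF Exp]] by blast
  qed
  ultimately have "k = 1" by arith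
  thus ?thesis using xV k by simp
qed

lemma parent_unique: "is_parent V E v x p \<Longrightarrow> is_parent V E v x q \<Longrightarrow> p = q"
  using parent_nth1 by blast

lemma parent_pth: assumes "is_parent V E v x p" shows "pth p = drop 1 (pth x)" "p \<in> V"
proof -
  show "p \<in> V" using assms unfolding is_parent_def by (blast intro: inV2)
  show "pth p = drop 1 (pth x)" using parent_nth1[OF assms] pth_drop by auto
qed

lemma parent_depth: assumes "is_parent V E v x p" shows "depth V E v x = Suc (depth V E v p)"
  using parent_pth[OF assms] parent_nth1[OF assms] depth_eq by auto

lemma parent_desc: "is_parent V E v x p \<Longrightarrow> descendant V E v x p"
  unfolding is_parent_def descendant_def by blast

lemma desc_V: "descendant V E v x y \<Longrightarrow> x \<in> V \<and> y \<in> V"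
proof -
  assume "descendant V E v x y"
  then obtain xs where xs: "is_path V E xs x v" "y \<in> set xs" unfolding descendant_def by blast
  have "x \<in> set xs" using xs(1) unfolding is_path_def by auto
  thus ?thesis using xs unfolding is_path_def by blast
qed

lemma desc_refl: assumes xV: "x \<in> V" shows "descendant V E v x x"
proof -
  have "hd (pth x) \<in> set (pth x)" using pth_ne[OF xV] by (rule hd_in_set)
  moreover have "hd (pth x) = x" using pth_path[OF xV] unfolding is_path_def by blast
  ultimately show ?thesis unfolding desc_iff[OF xV] by simp
qed

lemma desc_trans: assumes "descendant V E v x y" "descendant V E v y z" shows "descendant V E v x z"
proof -
  have xV: "x \<in> V" using desc_V assms by blast
  obtain k where k: "k < length (pth x)" "pth x ! k = y" using assms(1) desc_iff[OF xV] by (metis in_set_conv_nth)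
  have "z \<in> set (pth y)" using assms(2) desc_iff desc_V by blast
  hence "z \<in> set (drop k (pth x))" using pth_drop[OF xV k(1)] k by simp
  hence "z \<in> set (pth x)" by (rule in_set_dropD)
  thus ?thesis using desc_iff[OF xV] by simp
qed

lemma desc_cmp: assumes "descendant V E v x y" "descendant V E v x z"
  shows "descendant V E v y z \<or> descendant V E v z y"
proof -
  have xV: "x \<in> V" using desc_V assms by blast
  obtain k where k: "k < length (pth x)" "pth x ! k = y" using assms(1) desc_iff[OF xV] by (metis in_set_conv_nth)
  obtain j where j: "j < length (pth x)" "pth x ! j = z" using assms(2) desc_iff[OF xV] by (metis in_set_conv_nth)
  have yV: "y \<in> V" "z \<in> V" using desc_V assms by blast+
  show ?thesis
  proof (cases "k \<le> j")
    case True
    have "drop k (pth x) ! (j - k) \<in> set (drop k (pth x))" using True j by (intro nth_mem) simp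
    hence "z \<in> set (drop k (pth x))" using True j by simp
    thus ?thesis using pth_drop[OF xV k(1)] k desc_iff[OF yV(1)] by simp
  next
    case False
    have "drop j (pth x) ! (k - j) \<in> set (drop j (pth x))" using False k by (intro nth_mem) simp
    hence "y \<in> set (drop j (pth x))" using False k by simp
    thus ?thesis using pth_drop[OF xV j(1)] j desc_iff[OF yV(2)] by simp
  qed
qed

lemma desc_depth: assumes "descendant V E v x y" "x \<noteq> y" shows "depth V E v y < depth V E v x"
proof -
  have xV: "x \<in> V" using desc_V assms by blast
  obtain k where k: "k < length (pth x)" "pth x ! k = y" using assms(1) desc_iff[OF xV] by (metis in_set_conv_nth)
  have "k \<noteq> 0" using k pth_hd[OF xV] assms(2) by (cases k) auto
  thus ?thesis using depth_eq xV desc_V[OF assms(1)] pth_drop[OF xV k(1)] k by auto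
qed

lemma depth_lt: assumes "x \<in> V" shows "depth V E v x < card V"
proof -
  have "length (pth x) = card (set (pth x))" using pth_path[OF assms] unfolding is_path_def by (simp add: distinct_card)
  also have "\<dots> \<le> card V" using pth_path[OF assms] finV unfolding is_path_def by (simp add: card_mono)
  finally show ?thesis using depth_eq[OF assms] pth_ne[OF assms] by (cases "pth x") auto
qed

lemma dichotomy: assumes "E a b" shows "is_parent V E v a b \<or> is_parent V E v b a"
proof (cases "b \<in> set (pth a)")
  case True
  have aV: "a \<in> V" using inV1 assms by blast
  have "a \<noteq> v"
  proof
    assume "a = v"
    hence "pth a = [v]" using pth_eq[of "[v]" v] root unfolding is_path_def by simp
    thus False using True irrE[OF assms] \<open>a = v\<close> by simp
  qed
  then show ?thesis using True assms pth_path[OF aV] unfolding is_parent_def by blast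
next
  case False
  have aV: "a \<in> V" using inV1 assms by blast
  have bV: "b \<in> V" using inV2 assms by blast
  have pa: "is_path V E (pth a) a v" by (rule pth_path[OF aV])
  have "is_path V E (b # pth a) b v" using pa False bV symE[OF assms]
    unfolding is_path_succ by (auto simp: successively_Cons)
  moreover have "b \<noteq> v" using False pa unfolding is_path_def by (metis last_in_set)
  moreover have "a \<in> set (b # pth a)" using desc_refl[OF aV] desc_iff[OF aV] by simp
  ultimately show ?thesis using symE[OF assms] unfolding is_parent_def by blast
qed

lemma child: assumes "is_parent V E v a b" "E a d" "d \<noteq> b" shows "is_parent V E v d a"
  using dichotomy[OF assms(2)] parent_unique assms by blast

lemma cyc3: assumes "E a b" "E b c" "E c a" shows False
proof -
  have "is_path V E [a,b,c] a c" unfolding is_path_succ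
    using assms irrE inV1 by auto
  thus False using nocyc[of "[a,b,c]" a c] assms(3) by simp
qed

lemma cyc4: assumes "E a b" "E b c" "E c d" "E d a" "a \<noteq> c" "b \<noteq> d" shows False
proof -
  have "is_path V E [a,b,c,d] a d" unfolding is_path_succ
    using assms irrE inV1 by auto
  thus False using nocyc[of "[a,b,c,d]" a d] assms(4) by simp
qed

lemma cyc5: assumes "E a b" "E b c" "E c d" "E d e" "E e a" "distinct [a,b,c,d,e]" shows False
proof -
  have "is_path V E [a,b,c,d,e] a e" unfolding is_path_succ
    using assms inV1 by auto
  thus False using nocyc[of "[a,b,c,d,e]" a e] assms(5) by simp
qed

lemma sup_iff: "x \<in> supported V E S \<longleftrightarrow> x \<in> S \<and> dominating V E (S - {x})"
  unfolding supported_def crit_def by blast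

lemma crit_S: "crit V E S \<subseteq> S" unfolding crit_def by blast

lemma dom_sub: "dominating V E S \<Longrightarrow> S \<subseteq> V" unfolding dominating_def by blast

lemma N1_unique: assumes "y \<in> N1 V E S" "s \<in> S" "E y s" "s' \<in> S" "E y s'" shows "s' = s"
proof -
  have c: "card (closed_nbhd V E y \<inter> S) = 1" using assms(1) unfolding N1_def by blast
  obtain a where a: "closed_nbhd V E y \<inter> S = {a}" using card_1_singletonE[OF c] by blast
  have "s \<in> closed_nbhd V E y \<inter> S" using assms(2,3) inV2 unfolding closed_nbhd_def by blast
  moreover have "s' \<in> closed_nbhd V E y \<inter> S" using assms(4,5) inV2 unfolding closed_nbhd_def by blast
  ultimately show ?thesis using a by auto
qed

lemma N1_I: assumes "y \<in> V" "y \<notin> S" "s \<in> S" "E y s" "\<forall>s'\<in>S. E y s' \<longrightarrow> s' = s"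
  shows "y \<in> N1 V E S"
proof -
  have "closed_nbhd V E y \<inter> S = {s}"
    using assms inV2 unfolding closed_nbhd_def by blast
  thus ?thesis using assms(1,2) unfolding N1_def by simp
qed

lemma N1_D: "y \<in> N1 V E S \<Longrightarrow> y \<in> V \<and> y \<notin> S" unfolding N1_def by blast

lemma dom_at: "dominating V E S \<Longrightarrow> y \<in> V \<Longrightarrow> y \<notin> S \<Longrightarrow> \<exists>s\<in>S. E y s"
  unfolding dominating_def by blast

lemma dom_mono: "dominating V E S \<Longrightarrow> S \<subseteq> S' \<Longrightarrow> S' \<subseteq> V \<Longrightarrow> dominating V E S'"
  unfolding dominating_def by blast

lemma supV: "supported V E M \<subseteq> M" unfolding supported_def by blast

definition md where "md M = Min (depth V E v ` supported V E M)"
definition cnt where "cnt M = card {x \<in> supported V E M. depth V E v x = md M}"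
definition mu where "mu M = (card V - md M) * (card V + 1) + cnt M"

definition condA where "condA S \<longleftrightarrow> (\<forall>s\<in>supported V E S. \<forall>p. is_parent V E v s p \<longrightarrow> p \<notin> S)"
definition condB where "condB S \<longleftrightarrow> (\<forall>s\<in>supported V E S. \<forall>t\<in>supported V E S. s \<noteq> t \<longrightarrow> \<not> descendant V E v s t)"

end

locale stepctx = rtree +
  fixes S u
  assumes domS: "dominating V E S" and cA: "condA S" and cB: "condB S"
    and uS: "u \<in> supported V E S"
    and umin: "\<forall>w\<in>supported V E S. depth V E v u \<le> depth V E v w"
begin

definition "A = {x \<in> a1 V E S. E x u}"
definition "N = {y \<in> N1 V E S. \<exists>x\<in>A. E y x}"
definition "T = (S - A) \<union> N"

lemma u_in: "u \<in> S" "dominating V E (S - {u})" using uS sup_iff by blast+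

lemma SV: "S \<subseteq> V" using dom_sub[OF domS] .

lemma par_u: "is_parent V E v u p \<Longrightarrow> p \<notin> S" using cA uS unfolding condA_def by blast

lemma nbr_par: assumes "c \<in> S" "E c u" shows "is_parent V E v c u"
  using dichotomy[OF symE[OF assms(2)]] par_u assms(1) by blast

lemma A_eq: "A = {c \<in> S. E c u}"
proof
  show "A \<subseteq> {c \<in> S. E c u}" unfolding A_def a1_def using crit_S by blast
next
  show "{c \<in> S. E c u} \<subseteq> A"
  proof
    fix c assume "c \<in> {c \<in> S. E c u}"
    hence cS: "c \<in> S" and Ecu: "E c u" by auto
    have pc: "is_parent V E v c u" using nbr_par[OF cS Ecu] .
    have "c \<notin> supported V E S" using cA pc u_in(1) unfolding condA_def by blast
    hence "\<not> dominating V E (S - {c})" using cS sup_iff by blast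
    moreover have "S - {c} \<subseteq> V" using SV by blast
    ultimately obtain z where zV: "z \<in> V" and z1: "z \<notin> S - {c}" and z2: "\<forall>s\<in>S - {c}. \<not> E z s"
      unfolding dominating_def by blast
    have uc: "u \<noteq> c" using irrE[OF Ecu] by blast
    have zc: "z \<noteq> c"
    proof
      assume "z = c"
      thus False using z2 u_in(1) uc Ecu by blast
    qed
    hence zS: "z \<notin> S" using z1 by blast
    obtain s where s: "s \<in> S" "E z s" using domS zV zS unfolding dominating_def by blast
    have sc: "s = c" using s z2 by blast
    have "z \<in> N1 V E S"
      using N1_I[OF zV zS cS] s sc z2 by blast
    moreover have "z \<in> closed_nbhd V E c" using zV s sc symE unfolding closed_nbhd_def by blast
    moreover have "c \<in> crit V E S" using cS \<open>\<not> dominating V E (S - {c})\<close> unfolding crit_def by blast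
    ultimately show "c \<in> A" unfolding A_def a1_def using Ecu by blast
  qed
qed

lemma A_S: "A \<subseteq> S" using A_eq by blast
lemma u_notA: "u \<notin> A" using A_eq irrE by blast
lemma A_par: "c \<in> A \<Longrightarrow> is_parent V E v c u" using A_eq nbr_par by blast

lemma N_D: assumes "y \<in> N"
  obtains c where "c \<in> A" "E y c" "y \<in> V" "y \<notin> S" "\<And>s. s \<in> S \<Longrightarrow> E y s \<Longrightarrow> s = c"
proof -
  obtain c where c: "c \<in> A" "E y c" "y \<in> N1 V E S" using assms unfolding N_def by blast
  have "c \<in> S" using c A_S by blast
  thus ?thesis using that c N1_D[OF c(3)] N1_unique[OF c(3)] by blast
qed

lemma N_D': assumes "y \<in> N"
  shows "\<exists>c\<in>A. E y c \<and> y \<in> V \<and> y \<notin> S \<and> (\<forall>s\<in>S. E y s \<longrightarrow> s = c)"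
proof -
  obtain c where c: "c \<in> A" "E y c" "y \<in> N1 V E S" using assms unfolding N_def by blast
  have "c \<in> S" using c A_S by blast
  thus ?thesis using c N1_D[OF c(3)] N1_unique[OF c(3)] by blast
qed

lemma N_S: "N \<inter> S = {}" using N_D' by blast

lemma u_T: "u \<in> T" unfolding T_def using u_in u_notA by blast

lemma domT: "dominating V E T"
  unfolding dominating_def
proof (intro conjI ballI)
  show "T \<subseteq> V" unfolding T_def N_def using SV N1_D by blast
next
  fix x assume xV: "x \<in> V"
  show "x \<in> T \<or> (\<exists>s\<in>T. E x s)"
  proof (cases "x \<in> T")
    case True thus ?thesis by blast
  next
    case xT: False
    show ?thesis
    proof (cases "x \<in> A")
      case True
      hence "E x u" using A_eq by blast
      thus ?thesis using u_T by blast
    next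
      case False
      hence xS: "x \<notin> S" using xT unfolding T_def by blast
      obtain s where s: "s \<in> S" "E x s" using domS xV xS unfolding dominating_def by blast
      show ?thesis
      proof (cases "s \<in> A")
        case False thus ?thesis using s unfolding T_def by blast
      next
        case sA: True
        show ?thesis
        proof (cases "\<forall>s'\<in>S. E x s' \<longrightarrow> s' = s")
          case True
          hence "x \<in> N1 V E S" using N1_I[OF xV xS s(1) s(2)] by blast
          hence "x \<in> N" using sA s(2) unfolding N_def by blast
          thus ?thesis using xT unfolding T_def by blast
        next
          case False
          then obtain s' where s': "s' \<in> S" "E x s'" "s' \<noteq> s" by blast
          show ?thesis
          proof (cases "s' \<in> A")
            case False thus ?thesis using s' unfolding T_def by blast
          next
            case True
            have "E s u" using sA A_eq by auto
            have "E s' u" using True A_eq by auto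
            note this = \<open>E s u\<close> symE[OF this]
            moreover have "x \<noteq> u" using xS u_in by blast
            ultimately show ?thesis using cyc4[OF s(2) _ _ symE[OF s'(2)]] s' by blast
          qed
        qed
      qed
    qed
  qed
qed

lemma cardT: "card S \<le> card T"
proof -
  have fin: "finite S" "finite N" "finite A" using SV finV N_S A_S finite_subset unfolding N_def
    using N1_D by (metis (no_types, lifting) mem_Collect_eq subsetI)+
  have "\<forall>c\<in>A. \<exists>y. y \<in> N \<and> E c y"
  proof
    fix c assume cA: "c \<in> A"
    then obtain y where y: "y \<in> closed_nbhd V E c" "y \<in> N1 V E S" unfolding A_def a1_def by blast
    have "y \<noteq> c" using y(2) N1_D cA A_S by blast
    hence "E c y" using y(1) unfolding closed_nbhd_def by blast
    hence "y \<in> N" using y(2) cA symE unfolding N_def by blast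
    thus "\<exists>y. y \<in> N \<and> E c y" using \<open>E c y\<close> by blast
  qed
  then obtain f where f: "\<forall>c\<in>A. f c \<in> N \<and> E c (f c)" by metis
  have "inj_on f A"
  proof (rule inj_onI)
    fix c d assume "c \<in> A" "d \<in> A" "f c = f d"
    hence y: "f c \<in> N" "E c (f c)" "E d (f c)" using f by auto
    note y = y(1) symE[OF y(2)] symE[OF y(3)]
    obtain c0 where c0_1: "c0 \<in> A" and c0_2: "E (f c) c0 \<and> (f c) \<in> V \<and> (f c) \<notin> S \<and> (\<forall>s\<in>S. E (f c) s \<longrightarrow> s = c0)"
      using N_D'[OF y(1)] by (rule bexE)
    have c0: "c0 \<in> A" "E (f c) c0" "(f c) \<in> V" "(f c) \<notin> S" "\<And>s. s \<in> S \<Longrightarrow> E (f c) s \<Longrightarrow> s = c0"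
      using c0_1 c0_2 by auto
    thus "c = d" using y \<open>c \<in> A\<close> \<open>d \<in> A\<close> A_S by blast
  qed
  hence "card A \<le> card N" using card_inj_on_le f fin by blast
  moreover have "card T = card (S - A) + card N" unfolding T_def
  proof (rule card_Un_disjoint)
    show "finite (S - A)" using fin by simp
    show "finite N" using fin by simp
    show "(S - A) \<inter> N = {}" using N_S by blast
  qed
  moreover have "card S = card (S - A) + card A" using fin A_S
    by (metis card_Diff_subset card_mono le_add_diff_inverse2)
  ultimately show ?thesis by linarith
qed

lemma K: assumes xsT: "x \<in> supported V E T"
  shows "(x \<in> supported V E S \<and> x \<noteq> u) \<or>
    (x \<in> S \<and> x \<notin> A \<and> x \<noteq> u \<and> (\<exists>c y z. c \<in> A \<and> y \<in> N \<and> E y c \<and> E z y \<and> E z x \<and> z \<notin> S))"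
proof -
  have xT: "x \<in> T" and dT: "dominating V E (T - {x})" using xsT sup_iff by blast+
  have xV: "x \<in> V" using xT domT dom_sub by blast
  have xu: "x \<noteq> u"
  proof
    assume xu: "x = u"
    have "\<exists>w\<in>T - {x}. E x w" using dom_at[OF dT xV] by blast
    then obtain w where w: "w \<in> T - {u}" "E u w" unfolding xu by blast
    show False
    proof (cases "w \<in> N")
      case False
      hence "w \<in> S" using w unfolding T_def by auto
      moreover have "E w u" using symE[OF w(2)] .
      ultimately have "w \<in> A" using A_eq by blast
      thus False using w(1) False unfolding T_def by blast
    next
      case True
      obtain c where c_1: "c \<in> A" and c_2: "E w c \<and> w \<in> V \<and> w \<notin> S \<and> (\<forall>s\<in>S. E w s \<longrightarrow> s = c)"
        using N_D'[OF True] by (rule bexE)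
      have c: "c \<in> A" "E w c" "w \<in> V" "w \<notin> S" "\<And>s. s \<in> S \<Longrightarrow> E w s \<Longrightarrow> s = c"
        using c_1 c_2 by auto
      have "E c u" using c A_eq by blast
      thus False using cyc3[OF w(2) c(2)] by blast
    qed
  qed
  have xN: "x \<notin> N"
  proof
    assume xN: "x \<in> N"
    obtain c where c_1: "c \<in> A" and c_2: "E x c \<and> x \<in> V \<and> x \<notin> S \<and> (\<forall>s\<in>S. E x s \<longrightarrow> s = c)"
      using N_D'[OF xN] by (rule bexE)
    have c: "c \<in> A" "E x c" "x \<in> V" "x \<notin> S" "\<And>s. s \<in> S \<Longrightarrow> E x s \<Longrightarrow> s = c"
      using c_1 c_2 by auto
    obtain w where w: "w \<in> T - {x}" "E x w" using dom_at[OF dT xV] by blast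
    show False
    proof (cases "w \<in> N")
      case False
      hence "w \<in> S" "w \<notin> A" using w unfolding T_def by auto
      thus False using c(1,5) w(2) by blast
    next
      case True
      obtain c' where c'_1: "c' \<in> A" and c'_2: "E w c' \<and> w \<in> V \<and> w \<notin> S \<and> (\<forall>s\<in>S. E w s \<longrightarrow> s = c')"
        using N_D'[OF True] by (rule bexE)
      have c': "c' \<in> A" "E w c'" "w \<in> V" "w \<notin> S" "\<And>s. s \<in> S \<Longrightarrow> E w s \<Longrightarrow> s = c'"
        using c'_1 c'_2 by auto
      show False
      proof (cases "c' = c")
        case True
        thus False using cyc3[OF w(2) c'(2)] symE[OF c(2)] by blast
      next
        case False
        have cS: "c \<in> S" "c' \<in> S" using c c' A_S by auto
        have "E c' u" using c' A_eq by auto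
        have "E c u" using c A_eq by auto
        hence "E u c" by (rule symE)
        moreover have "distinct [x, w, c', u, c]"
          using False cS c(4) c'(4) u_in(1) irrE[OF w(2)] irrE[OF \<open>E c' u\<close>] irrE[OF \<open>E u c\<close>]
          by auto
        ultimately show False using cyc5[OF w(2) c'(2) \<open>E c' u\<close> \<open>E u c\<close> symE[OF c(2)]] by blast
      qed
    qed
  qed
  have xS: "x \<in> S" "x \<notin> A" using xT xN unfolding T_def by auto
  show ?thesis
  proof (cases "x \<in> supported V E S")
    case True thus ?thesis using xu by blast
  next
    case False
    hence "\<not> dominating V E (S - {x})" using xS sup_iff by blast
    moreover have "S - {x} \<subseteq> V" using SV by blast
    ultimately obtain z where zV: "z \<in> V" and z1: "z \<notin> S - {x}" and z2: "\<forall>s\<in>S - {x}. \<not> E z s"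
      unfolding dominating_def by blast
    have "z \<in> T - {x} \<or> (\<exists>w\<in>T - {x}. E z w)" using dom_at[OF dT zV] by blast
    moreover have "z \<notin> T - {x}"
    proof
      assume zT: "z \<in> T - {x}"
      show False
      proof (cases "z \<in> N")
        case False thus False using zT z1 unfolding T_def by blast
      next
        case True
        obtain c where c_1: "c \<in> A" and c_2: "E z c \<and> z \<in> V \<and> z \<notin> S \<and> (\<forall>s\<in>S. E z s \<longrightarrow> s = c)"
          using N_D'[OF True] by (rule bexE)
        have c: "c \<in> A" "E z c" "z \<in> V" "z \<notin> S" "\<And>s. s \<in> S \<Longrightarrow> E z s \<Longrightarrow> s = c"
          using c_1 c_2 by auto
        have "c \<in> S - {x}" using c(1) A_S xS by blast
        thus False using z2 c(2) by blast
      qed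
    qed
    ultimately obtain w where w: "w \<in> T - {x}" "E z w" by blast
    have wN: "w \<in> N"
    proof (rule ccontr)
      assume "w \<notin> N"
      hence "w \<in> S - {x}" using w(1) unfolding T_def by blast
      thus False using z2 w(2) by blast
    qed
    obtain c where c1: "c \<in> A" and c2: "E w c \<and> w \<in> V \<and> w \<notin> S \<and> (\<forall>s\<in>S. E w s \<longrightarrow> s = c)"
      using N_D'[OF wN] by (rule bexE)
    have c: "c \<in> A" "E w c" "w \<in> V" "w \<notin> S" "\<And>s. s \<in> S \<Longrightarrow> E w s \<Longrightarrow> s = c"
      using c1 c2 by auto
    have zx: "z \<noteq> x"
    proof
      assume "z = x"
      hence "E w x" using symE[OF w(2)] by simp
      hence "x = c" using c(5)[OF xS(1)] by blast
      thus False using xS c(1) by blast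
    qed
    hence zS: "z \<notin> S" using z1 by blast
    obtain s where s: "s \<in> S" "E z s" using dom_at[OF domS zV zS] by blast
    have "s = x" using s z2 by blast
    hence "E z x" using s by simp
    hence "\<exists>c y z. c \<in> A \<and> y \<in> N \<and> E y c \<and> E z y \<and> E z x \<and> z \<notin> S"
      using c(1,2) wN w(2) zS by (intro exI[of _ c] exI[of _ w] exI[of _ z]) simp
    thus ?thesis using xu xS by simp
  qed
qed

lemma newchain: assumes xS: "x \<in> S" and cA: "c \<in> A" and yN: "y \<in> N" and Eyc: "E y c"
  and Ezy: "E z y" and Ezx: "E z x" and zS: "z \<notin> S"
  shows "is_parent V E v x z" "descendant V E v x u" "depth V E v x = depth V E v u + 4"
proof -
  have p1: "is_parent V E v c u" using A_par[OF cA] .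
  have yS: "y \<notin> S" using yN N_S by blast
  have cS: "c \<in> S" using cA A_S by blast
  have "y \<noteq> u" using yS u_in(1) by blast
  hence p2: "is_parent V E v y c" using child[OF p1 symE[OF Eyc]] by blast
  have "z \<noteq> c" using zS cS by blast
  hence p3: "is_parent V E v z y" using child[OF p2 symE[OF Ezy]] by blast
  have "x \<noteq> y" using xS yS by blast
  hence p4: "is_parent V E v x z" using child[OF p3 Ezx] by blast
  show "is_parent V E v x z" by (rule p4)
  show "descendant V E v x u"
    using desc_trans[OF parent_desc[OF p4] desc_trans[OF parent_desc[OF p3] desc_trans[OF parent_desc[OF p2] parent_desc[OF p1]]]] .
  show "depth V E v x = depth V E v u + 4"
    using parent_depth[OF p1] parent_depth[OF p2] parent_depth[OF p3] parent_depth[OF p4] by simp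
qed

lemma K2: assumes "x \<in> supported V E T"
  shows "(x \<in> supported V E S \<and> x \<noteq> u) \<or>
    (\<exists>z. z \<notin> T \<and> is_parent V E v x z \<and> descendant V E v x u \<and> depth V E v x = depth V E v u + 4)"
proof -
  from K[OF assms] show ?thesis
  proof
    assume "x \<in> supported V E S \<and> x \<noteq> u" thus ?thesis by blast
  next
    assume "x \<in> S \<and> x \<notin> A \<and> x \<noteq> u \<and> (\<exists>c y z. c \<in> A \<and> y \<in> N \<and> E y c \<and> E z y \<and> E z x \<and> z \<notin> S)"
    then obtain c y z where h: "x \<in> S" "x \<notin> A" "c \<in> A" "y \<in> N" "E y c" "E z y" "E z x" "z \<notin> S" by blast
    have "z \<notin> N"
    proof
      assume "z \<in> N"
      note zN = this
      obtain c' where c'_1: "c' \<in> A" and c'_2: "E z c' \<and> z \<in> V \<and> z \<notin> S \<and> (\<forall>s\<in>S. E z s \<longrightarrow> s = c')"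
        using N_D'[OF zN] by (rule bexE)
      have c': "c' \<in> A" "E z c'" "z \<in> V" "z \<notin> S" "\<And>s. s \<in> S \<Longrightarrow> E z s \<Longrightarrow> s = c'"
        using c'_1 c'_2 by auto
      hence "x = c'" using h(1,7) by blast
      thus False using h(2) \<open>c' \<in> A\<close> by blast
    qed
    hence "z \<notin> T" using h(8) unfolding T_def by blast
    thus ?thesis using newchain[OF h(1,3-8)] by blast
  qed
qed

lemma condA_T: "condA T"
  unfolding condA_def
proof (intro ballI allI impI)
  fix x p assume xs: "x \<in> supported V E T" and px: "is_parent V E v x p"
  from K2[OF xs] show "p \<notin> T"
  proof
    assume old: "x \<in> supported V E S \<and> x \<noteq> u"
    have pS: "p \<notin> S" using cA old px unfolding condA_def by blast
    have "p \<notin> N"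
    proof
      assume "p \<in> N"
      note pN = this
      obtain c where c_1: "c \<in> A" and c_2: "E p c \<and> p \<in> V \<and> p \<notin> S \<and> (\<forall>s\<in>S. E p s \<longrightarrow> s = c)"
        using N_D'[OF pN] by (rule bexE)
      have c: "c \<in> A" "E p c" "p \<in> V" "p \<notin> S" "\<And>s. s \<in> S \<Longrightarrow> E p s \<Longrightarrow> s = c"
        using c_1 c_2 by auto
      have "p \<noteq> u" using pS u_in(1) by blast
      hence pc: "is_parent V E v p c" using child[OF A_par[OF c(1)] symE[OF c(2)]] by blast
      have "descendant V E v x u"
        using desc_trans[OF parent_desc[OF px] desc_trans[OF parent_desc[OF pc] parent_desc[OF A_par[OF c(1)]]]] .
      thus False using cB old uS unfolding condB_def by blast
    qed
    thus "p \<notin> T" using pS unfolding T_def by blast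
  next
    assume "\<exists>z. z \<notin> T \<and> is_parent V E v x z \<and> descendant V E v x u \<and> depth V E v x = depth V E v u + 4"
    then obtain z where "z \<notin> T" "is_parent V E v x z" by blast
    thus "p \<notin> T" using parent_unique px by blast
  qed
qed

lemma condB_T: "condB T"
  unfolding condB_def
proof (intro ballI impI notI)
  fix s t assume ss: "s \<in> supported V E T" and ts: "t \<in> supported V E T" and st: "s \<noteq> t"
    and dst: "descendant V E v s t"
  have B: "\<And>a b. a \<in> supported V E S \<Longrightarrow> b \<in> supported V E S \<Longrightarrow> a \<noteq> b \<Longrightarrow> descendant V E v a b \<Longrightarrow> False"
    using cB unfolding condB_def by blast
  from K2[OF ss] show False
  proof
    assume so: "s \<in> supported V E S \<and> s \<noteq> u"
    from K2[OF ts] show False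
    proof
      assume "t \<in> supported V E S \<and> t \<noteq> u"
      thus False using B so st dst by blast
    next
      assume "\<exists>z. z \<notin> T \<and> is_parent V E v t z \<and> descendant V E v t u \<and> depth V E v t = depth V E v u + 4"
      hence "descendant V E v t u" by blast
      hence "descendant V E v s u" using desc_trans dst by blast
      thus False using B so uS by blast
    qed
  next
    assume "\<exists>z. z \<notin> T \<and> is_parent V E v s z \<and> descendant V E v s u \<and> depth V E v s = depth V E v u + 4"
    hence sn: "descendant V E v s u" "depth V E v s = depth V E v u + 4" by blast+
    from K2[OF ts] show False
    proof
      assume to: "t \<in> supported V E S \<and> t \<noteq> u"
      have "descendant V E v t u \<or> descendant V E v u t" using desc_cmp[OF dst sn(1)] .
      thus False using B to uS by blast
    next
      assume "\<exists>z. z \<notin> T \<and> is_parent V E v t z \<and> descendant V E v t u \<and> depth V E v t = depth V E v u + 4"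
      hence "depth V E v t = depth V E v u + 4" by blast
      thus False using desc_depth[OF dst st] sn(2) by simp
    qed
  qed
qed

lemma supT_depth: "x \<in> supported V E T \<Longrightarrow> (x \<in> supported V E S \<and> x \<noteq> u) \<or> depth V E v u < depth V E v x"
  using K2 by fastforce



lemma mu_dec: assumes ne: "supported V E T \<noteq> {}" shows "mu T < mu S"
proof -
  define n where "n = card V"
  define d where "d = depth V E v u"
  have TV: "T \<subseteq> V" using dom_sub[OF domT] .
  have finS: "finite (supported V E S)" using supV SV finV finite_subset by metis
  have finT: "finite (supported V E T)" using supV TV finV finite_subset by metis
  have uV: "u \<in> V" using u_in(1) SV by blast
  have dn: "d < n" unfolding d_def n_def using depth_lt[OF uV] .
  have mdS: "md S = d" unfolding md_def d_def
    by (rule Min_eqI) (use finS umin uS in auto)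
  have geT: "\<And>x. x \<in> supported V E T \<Longrightarrow> d \<le> depth V E v x"
    using supT_depth umin unfolding d_def by fastforce
  have "md T \<in> depth V E v ` supported V E T" unfolding md_def
    by (rule Min_in) (use finT ne in auto)
  then obtain x0 where x0: "x0 \<in> supported V E T" "md T = depth V E v x0" by blast
  have dT: "d \<le> md T" using geT[OF x0(1)] x0(2) by simp
  have cT: "cnt T \<le> n" unfolding cnt_def n_def
    by (rule card_mono[OF finV]) (use supV TV in blast)
  show ?thesis
  proof (cases "d < md T")
    case True
    have "n - md T + 1 \<le> n - d" using True dn by linarith
    hence "(n - md T + 1) * (n + 1) \<le> (n - d) * (n + 1)" by (rule mult_le_mono1)
    hence "mu T < (n - d) * (n + 1)" unfolding mu_def n_def[symmetric] using cT by simp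
    also have "\<dots> \<le> mu S" unfolding mu_def n_def[symmetric] mdS by simp
    finally show ?thesis .
  next
    case False
    hence mdT: "md T = d" using dT by simp
    have sub: "{x \<in> supported V E T. depth V E v x = md T} \<subseteq> {x \<in> supported V E S. depth V E v x = md S} - {u}"
    proof
      fix x assume "x \<in> {x \<in> supported V E T. depth V E v x = md T}"
      hence x: "x \<in> supported V E T" "depth V E v x = d" using mdT by auto
      have "\<not> d < depth V E v x" using x(2) by simp
      hence "x \<in> supported V E S \<and> x \<noteq> u" using supT_depth[OF x(1)] unfolding d_def by blast
      thus "x \<in> {x \<in> supported V E S. depth V E v x = md S} - {u}" using x(2) mdS by simp
    qed
    have "card ({x \<in> supported V E S. depth V E v x = md S} - {u}) < card {x \<in> supported V E S. depth V E v x = md S}"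
      by (rule card_Diff1_less) (use finS uS mdS d_def in auto)
    moreover have "finite ({x \<in> supported V E S. depth V E v x = md S} - {u})" using finS by simp
    hence "card {x \<in> supported V E T. depth V E v x = md T} \<le> card ({x \<in> supported V E S. depth V E v x = md S} - {u})"
      using sub by (rule card_mono)
    ultimately have "cnt T < cnt S" unfolding cnt_def by linarith
    thus ?thesis unfolding mu_def mdT mdS by simp
  qed
qed

end

context rtree
begin

lemma step_inv: assumes dS: "dominating V E S" and aS: "condA S" and bS: "condB S"
  and st: "alg_step V E v S T"
  shows "dominating V E T \<and> condA T \<and> condB T \<and> card S \<le> card T \<and> (supported V E T \<noteq> {} \<longrightarrow> mu T < mu S)"
proof -
  obtain u where u: "u \<in> supported V E S" "\<forall>w\<in>supported V E S. depth V E v u \<le> depth V E v w"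
    and T: "T = (S - {x \<in> a1 V E S. E x u}) \<union> {y \<in> N1 V E S. \<exists>x\<in>{x \<in> a1 V E S. E x u}. E y x}"
    using st unfolding alg_step_def Let_def by blast
  have "stepctx V E v S u" unfolding stepctx_def stepctx_axioms_def
    using rtree_axioms dS aS bS u by blast
  then interpret sc: stepctx V E v S u .
  have TT: "T = sc.T" unfolding sc.T_def sc.A_def sc.N_def T ..
  show ?thesis unfolding TT using sc.domT sc.condA_T sc.condB_T sc.cardT sc.mu_dec by blast
qed

lemma exists_step: assumes dS: "dominating V E S" and nm: "\<not> minimal_dominating V E S"
  shows "\<exists>T. alg_step V E v S T"
proof -
  obtain S' where S': "S' \<subset> S" "dominating V E S'" using dS nm unfolding minimal_dominating_def by blast
  then obtain w where w: "w \<in> S" "w \<notin> S'" by blast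
  have s1: "S' \<subseteq> S - {w}" using S'(1) w(2) by blast
  have s2: "S - {w} \<subseteq> V" using dom_sub[OF dS] by blast
  have "dominating V E (S - {w})" using dom_mono[OF S'(2) s1 s2] .
  hence wS: "w \<in> supported V E S" using w sup_iff by blast
  have SV: "S \<subseteq> V" using dom_sub[OF dS] .
  have fin: "finite (supported V E S)" using supV SV finV finite_subset by metis
  have f2: "finite (depth V E v ` supported V E S)" using fin by (rule finite_imageI)
  have ne: "depth V E v ` supported V E S \<noteq> {}" using wS by blast
  have "Min (depth V E v ` supported V E S) \<in> depth V E v ` supported V E S"
    using Min_in[OF f2 ne] .
  then obtain u where u0: "Min (depth V E v ` supported V E S) = depth V E v u" "u \<in> supported V E S" by (rule imageE)
  have u: "u \<in> supported V E S" "depth V E v u = Min (depth V E v ` supported V E S)" using u0 by simp_all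
  have umin: "\<forall>w\<in>supported V E S. depth V E v u \<le> depth V E v w"
  proof
    fix w assume "w \<in> supported V E S"
    hence "depth V E v w \<in> depth V E v ` supported V E S" by (rule imageI)
    thus "depth V E v u \<le> depth V E v w" using Min_le[OF f2] u(2) by simp
  qed
  have "alg_step V E v S ((S - {x \<in> a1 V E S. E x u}) \<union> {y \<in> N1 V E S. \<exists>x\<in>{x \<in> a1 V E S. E x u}. E y x})"
    unfolding alg_step_def Let_def
  proof (rule conjI[OF nm], rule exI[of _ u], intro conjI)
    show "u \<in> supported V E S" by (rule u(1))
    show "\<forall>w\<in>supported V E S. depth V E v u \<le> depth V E v w" by (rule umin)
  qed simp
  thus ?thesis by (rule exI)
qed

end

lemma no_decr: fixes g :: "nat \<Rightarrow> nat" assumes "\<forall>i. g (Suc i) < g i" shows False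
proof -
  have "\<And>i. g i + i \<le> g 0"
  proof -
    fix i show "g i + i \<le> g 0"
    proof (induction i)
      case (Suc i) thus ?case using assms[rule_format, of i] by simp
    qed simp
  qed
  from this[of "Suc (g 0)"] show False by simp
qed

theorem theorem4p4:
  fixes V :: "'a set" and E :: "'a \<Rightarrow> 'a \<Rightarrow> bool" and v :: 'a and M0 :: "'a set"
  assumes "is_tree V E" and "v \<in> V"
    and "dominating V E M0"
    and "\<forall>s\<in>supported V E M0. \<forall>p. is_parent V E v s p \<longrightarrow> p \<notin> M0"
    and "\<forall>s\<in>supported V E M0. \<forall>t\<in>supported V E M0. s \<noteq> t \<longrightarrow> \<not> descendant V E v s t"
  shows "\<not> (\<exists>f. f 0 = M0 \<and> (\<forall>i. alg_step V E v (f i) (f (Suc i))))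
    \<and> (\<forall>M. (alg_step V E v)\<^sup>*\<^sup>* M0 M \<and> \<not> (\<exists>M'. alg_step V E v M M')
           \<longrightarrow> minimal_dominating V E M \<and> card M0 \<le> card M)"
proof -
  interpret rtree V E v using assms(1,2) by (rule rtree.intro)
  define Inv where "Inv M \<longleftrightarrow> dominating V E M \<and> condA M \<and> condB M \<and> card M0 \<le> card M" for M
  have I0: "Inv M0" unfolding Inv_def condA_def condB_def using assms(3-5) by blast
  have Istep: "Inv T" if "Inv S" "alg_step V E v S T" for S T
    using step_inv[of S T] that unfolding Inv_def by auto
  have Ireach: "Inv M" if "(alg_step V E v)\<^sup>*\<^sup>* M0 M" for M
    using that
  proof (induction rule: rtranclp_induct)
    case base show ?case by (rule I0)
  next
    case (step y z) thus ?case using Istep by blast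
  qed
  have P1: "\<not> (\<exists>f. f 0 = M0 \<and> (\<forall>i. alg_step V E v (f i) (f (Suc i))))"
  proof
    assume "\<exists>f. f 0 = M0 \<and> (\<forall>i. alg_step V E v (f i) (f (Suc i)))"
    then obtain f where f0: "f 0 = M0" and fs: "\<forall>i. alg_step V E v (f i) (f (Suc i))" by blast
    have fI: "Inv (f i)" for i
    proof (induction i)
      case 0 show ?case using I0 f0 by simp
    next
      case (Suc i) thus ?case using Istep fs by blast
    qed
    have "\<forall>i. mu (f (Suc i)) < mu (f i)"
    proof
      fix i
      have "supported V E (f (Suc i)) \<noteq> {}"
        using fs[rule_format, of "Suc i"] unfolding alg_step_def by blast
      thus "mu (f (Suc i)) < mu (f i)"
        using step_inv[of "f i" "f (Suc i)"] fI[of i] fs unfolding Inv_def by blast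
    qed
    thus False by (rule no_decr)
  qed
  have P2: "\<forall>M. (alg_step V E v)\<^sup>*\<^sup>* M0 M \<and> \<not> (\<exists>M'. alg_step V E v M M')
           \<longrightarrow> minimal_dominating V E M \<and> card M0 \<le> card M"
  proof (intro allI impI)
    fix M assume h: "(alg_step V E v)\<^sup>*\<^sup>* M0 M \<and> \<not> (\<exists>M'. alg_step V E v M M')"
    hence IM: "Inv M" using Ireach by blast
    have "minimal_dominating V E M"
      using exists_step[of M] IM h unfolding Inv_def by blast
    thus "minimal_dominating V E M \<and> card M0 \<le> card M" using IM unfolding Inv_def by blast
  qed
  show ?thesis using P1 P2 by blast
qed

end
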